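(* Let $G$ be a $2K_2$-free graph, let $a,b$ be adjacent vertices of $G$, and let $X$ be a minimal dominating set of $G$ with $a,b\in X$ and $|X|>\alpha(G)$. Let $A$ be the set of vertices not in $\{a,b\}$ adjacent to neither $a$ nor $b$, let $N$ be the set of vertices not in $\{a,b\}$ adjacent to at least one of $a,b$, let $Y=X\cap N$, and let $Z$ be the set of vertices of $A$ having at least one neighbour in $Y$. Then $|Y|=|Z|$ and every vertex of $Z$ is a private neighbour (with respect to $X$) of some vertex of $Y$.
   Context: All graphs are finite, simple and undirected. $2K_2$-free means no induced subgraph isomorphic to the disjoint union of two edges. $\alpha(G)$ is the maximum size of an independent set of $G$. A dominating set is a vertex set $D$ such that every vertex outside $D$ has a neighbour in $D$; it is minimal if no proper subset is dominating. Given a dominating set $D$ and $x\in D$, a vertex $y\notin D$ is a private neighbour of $x$ if $x$ is the only neighbour of $y$ in $D$. *)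

theory Defs
  imports Main
begin

definition simple_graph :: "'a set \<Rightarrow> ('a \<Rightarrow> 'a \<Rightarrow> bool) \<Rightarrow> bool" where
  "simple_graph V E \<longleftrightarrow> finite V \<and> (\<forall>x y. E x y \<longrightarrow> x \<in> V \<and> y \<in> V)
     \<and> (\<forall>x y. E x y \<longrightarrow> E y x) \<and> (\<forall>x. \<not> E x x)"

definition two_K2_free :: "'a set \<Rightarrow> ('a \<Rightarrow> 'a \<Rightarrow> bool) \<Rightarrow> bool" where
  "two_K2_free V E \<longleftrightarrow> \<not> (\<exists>a\<in>V. \<exists>b\<in>V. \<exists>c\<in>V. \<exists>d\<in>V.
      distinct [a, b, c, d] \<and> E a b \<and> E c d \<and>
      \<not> E a c \<and> \<not> E a d \<and> \<not> E b c \<and> \<not> E b d)"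

definition independent_set :: "'a set \<Rightarrow> ('a \<Rightarrow> 'a \<Rightarrow> bool) \<Rightarrow> 'a set \<Rightarrow> bool" where
  "independent_set V E S \<longleftrightarrow> S \<subseteq> V \<and> (\<forall>x\<in>S. \<forall>y\<in>S. \<not> E x y)"

definition alpha :: "'a set \<Rightarrow> ('a \<Rightarrow> 'a \<Rightarrow> bool) \<Rightarrow> nat" where
  "alpha V E = Max {card S | S. independent_set V E S}"

definition dominating_set :: "'a set \<Rightarrow> ('a \<Rightarrow> 'a \<Rightarrow> bool) \<Rightarrow> 'a set \<Rightarrow> bool" where
  "dominating_set V E D \<longleftrightarrow> D \<subseteq> V \<and> (\<forall>v\<in>V - D. \<exists>u\<in>D. E v u)"

definition minimal_dominating_set :: "'a set \<Rightarrow> ('a \<Rightarrow> 'a \<Rightarrow> bool) \<Rightarrow> 'a set \<Rightarrow> bool" where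
  "minimal_dominating_set V E D \<longleftrightarrow> dominating_set V E D \<and>
     (\<forall>D'. D' \<subset> D \<longrightarrow> \<not> dominating_set V E D')"

definition private_neighbour :: "'a set \<Rightarrow> ('a \<Rightarrow> 'a \<Rightarrow> bool) \<Rightarrow> 'a set \<Rightarrow> 'a \<Rightarrow> 'a \<Rightarrow> bool" where
  "private_neighbour V E D x y \<longleftrightarrow> x \<in> D \<and> y \<in> V - D \<and> E x y \<and> (\<forall>u\<in>D. E y u \<longrightarrow> u = x)"

end

theory Submission
  imports Defs
begin

lemma priv_exists:
  assumes "simple_graph V E" "minimal_dominating_set V E X" "x \<in> X" "w \<in> X" "E x w"
  shows "\<exists>v. private_neighbour V E X x v"
proof -
  have dom: "dominating_set V E X" and mn: "\<And>D'. D' \<subset> X \<Longrightarrow> \<not> dominating_set V E D'"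
    using assms(2) unfolding minimal_dominating_set_def by auto
  have XV: "X \<subseteq> V" using dom unfolding dominating_set_def by auto
  have "X - {x} \<subset> X" using assms(3) by auto
  hence "\<not> dominating_set V E (X - {x})" using mn by blast
  then obtain v where v: "v \<in> V - (X - {x})" "\<forall>u\<in>X - {x}. \<not> E v u"
    using XV unfolding dominating_set_def by auto
  have "v \<noteq> x"
  proof
    assume "v = x"
    have "w \<noteq> x" using assms(1,5) unfolding simple_graph_def by auto
    thus False using v assms(4,5) \<open>v = x\<close> by auto
  qed
  hence vX: "v \<in> V - X" using v by auto
  then obtain u where "u \<in> X" "E v u" using dom unfolding dominating_set_def by auto
  hence "u = x" using v by auto
  hence "E x v" using \<open>E v u\<close> assms(1) unfolding simple_graph_def by auto
  have "\<forall>u\<in>X. E v u \<longrightarrow> u = x" using v by auto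
  thus ?thesis using vX \<open>E x v\<close> assms(3) unfolding private_neighbour_def by auto
qed

theorem claim3:
  fixes V :: "'a set" and E :: "'a \<Rightarrow> 'a \<Rightarrow> bool" and a b :: 'a and X :: "'a set"
  assumes "simple_graph V E"
    and "two_K2_free V E"
    and "a \<in> V" and "b \<in> V" and "E a b"
    and "minimal_dominating_set V E X"
    and "a \<in> X" and "b \<in> X"
    and "card X > alpha V E"
  shows "let A = {v \<in> V - {a, b}. \<not> E v a \<and> \<not> E v b};
             N = {v \<in> V - {a, b}. E v a \<or> E v b};
             Y = X \<inter> N;
             Z = {v \<in> A. \<exists>y\<in>Y. E v y}
         in card Y = card Z \<and> (\<forall>z\<in>Z. \<exists>y\<in>Y. private_neighbour V E X y z)"
proof -
  define A where "A = {v \<in> V - {a, b}. \<not> E v a \<and> \<not> E v b}"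
  define N where "N = {v \<in> V - {a, b}. E v a \<or> E v b}"
  define Y where "Y = X \<inter> N"
  define Z where "Z = {v \<in> A. \<exists>y\<in>Y. E v y}"
  have G: "finite V" "\<And>x y. E x y \<Longrightarrow> x \<in> V \<and> y \<in> V" "\<And>x y. E x y \<Longrightarrow> E y x" "\<And>x. \<not> E x x"
    using assms(1) unfolding simple_graph_def by auto
  have dom: "dominating_set V E X" using assms(6) unfolding minimal_dominating_set_def by auto
  have XV: "X \<subseteq> V" using dom unfolding dominating_set_def by auto
  have fX: "finite X" using XV G(1) finite_subset by blast
  have AV: "A \<subseteq> V" unfolding A_def by auto
  have fA: "finite A" using AV G(1) finite_subset by blast
  have fY: "finite Y" using fX unfolding Y_def by auto
  have Aind: "\<And>u v. u \<in> A \<Longrightarrow> v \<in> A \<Longrightarrow> \<not> E u v"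
  proof
    fix u v assume u: "u \<in> A" and v: "v \<in> A" and e: "E u v"
    have "u \<noteq> v" using e G(4) by auto
    have "a \<noteq> b" using assms(5) G(4) by auto
    have "distinct [a, b, u, v]" using u v \<open>u \<noteq> v\<close> \<open>a \<noteq> b\<close> unfolding A_def by auto
    moreover have "\<not> E a u \<and> \<not> E a v \<and> \<not> E b u \<and> \<not> E b v"
      using u v G(3) unfolding A_def by blast
    moreover have H: "\<And>a' b' c d. a' \<in> V \<Longrightarrow> b' \<in> V \<Longrightarrow> c \<in> V \<Longrightarrow> d \<in> V \<Longrightarrow>
      \<not> (distinct [a', b', c, d] \<and> E a' b' \<and> E c d \<and>
      \<not> E a' c \<and> \<not> E a' d \<and> \<not> E b' c \<and> \<not> E b' d)"
      using assms(2) unfolding two_K2_free_def by blast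
    moreover have "u \<in> V" "v \<in> V" using u v AV by auto
    ultimately show False using H[of a b u v] assms(3,4,5) e by simp
  qed
  have Aa: "\<And>y. y \<in> A \<Longrightarrow> \<not> E a y" using G(3) unfolding A_def by blast
  have IS: "independent_set V E (insert a A)"
    unfolding independent_set_def
  proof
    show "insert a A \<subseteq> V" using AV assms(3) by simp
    show "\<forall>x\<in>insert a A. \<forall>y\<in>insert a A. \<not> E x y"
    proof (intro ballI)
      fix x y assume x: "x \<in> insert a A" and y: "y \<in> insert a A"
      show "\<not> E x y"
      proof (cases "x = a")
        case True
        then show ?thesis using y Aa G(4) by (cases "y = a") simp_all
      next
        case False
        hence xA: "x \<in> A" using x by simp
        show ?thesis
        proof (cases "y = a")
          case True
          then show ?thesis using Aa[OF xA] G(3) by blast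
        next
          case False
          then show ?thesis using y Aind[OF xA] by simp
        qed
      qed
    qed
  qed
  have sub: "{card S | S. independent_set V E S} \<subseteq> {..card V}"
  proof
    fix n assume "n \<in> {card S | S. independent_set V E S}"
    then obtain S where "n = card S" "S \<subseteq> V" unfolding independent_set_def by blast
    thus "n \<in> {..card V}" using card_mono[OF G(1)] by simp
  qed
  have fin: "finite {card S | S. independent_set V E S}"
    using finite_subset[OF sub finite_atMost] .
  have mem: "card (insert a A) \<in> {card S | S. independent_set V E S}" using IS by blast
  have "card (insert a A) \<le> alpha V E" unfolding alpha_def using Max_ge[OF fin mem] .
  moreover have "a \<notin> A" unfolding A_def by auto
  ultimately have c1: "card A + 1 < card X" using assms(9) fA by simp
  have "X \<subseteq> {a, b} \<union> Y \<union> (X \<inter> A)" using XV unfolding Y_def N_def A_def by auto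
  hence "card X \<le> card ({a, b} \<union> Y \<union> (X \<inter> A))" using fY fA by (intro card_mono) auto
  also have "\<dots> \<le> card ({a, b} \<union> Y) + card (X \<inter> A)" by (rule card_Un_le)
  also have "\<dots> \<le> card {a,b} + card Y + card (X \<inter> A)" using card_Un_le[of "{a,b}" Y] by linarith
  finally have cX: "card X \<le> card {a,b} + card Y + card (X \<inter> A)" .
  have "card {a,b} \<le> 2" by (simp add: card_insert_le_m1)
  hence "card A \<le> card Y + card (X \<inter> A)" using c1 cX by linarith
  moreover have "card (A - X) = card A - card (X \<inter> A)"
    using fA by (simp add: card_Diff_subset_Int Int_commute)
  ultimately have cAX: "card (A - X) \<le> card Y" by linarith
  have ZAX: "Z \<subseteq> A - X"
  proof
    fix z assume z: "z \<in> Z"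
    show "z \<in> A - X"
    proof (rule ccontr)
      assume "z \<notin> A - X"
      hence zX: "z \<in> X" using z unfolding Z_def by auto
      obtain y where y: "y \<in> Y" "E z y" using z unfolding Z_def by auto
      obtain q where q: "private_neighbour V E X z q"
        using priv_exists[OF assms(1) assms(6) zX, of y] y unfolding Y_def by auto
      have zA: "z \<in> A" using z unfolding Z_def by auto
      hence "z \<noteq> a" "z \<noteq> b" unfolding A_def by auto
      moreover have "q \<noteq> a" "q \<noteq> b" using q assms(7,8) unfolding private_neighbour_def by auto
      ultimately have "q \<in> A"
        using q assms(7,8) unfolding private_neighbour_def A_def by auto
      moreover note zA
      ultimately show False using Aind q unfolding private_neighbour_def by auto
    qed
  qed
  define Q where "Q = {z \<in> Z. \<exists>y\<in>Y. private_neighbour V E X y z}"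
  have py: "\<exists>z. private_neighbour V E X y z" if "y \<in> Y" for y
  proof -
    have "y \<in> X" "E y a \<or> E y b" using that unfolding Y_def N_def by auto
    thus ?thesis using priv_exists[OF assms(1) assms(6)] assms(7,8) by blast
  qed
  define p where "p y = (SOME z. private_neighbour V E X y z)" for y
  have pp: "private_neighbour V E X y (p y)" if "y \<in> Y" for y
    unfolding p_def using py[OF that] by (rule someI_ex)
  have pQ: "p y \<in> Q" if "y \<in> Y" for y
  proof -
    have P: "private_neighbour V E X y (p y)" using pp that by blast
    have "p y \<in> A" using P assms(7,8) G(3) that unfolding private_neighbour_def A_def Y_def N_def
      by auto
    thus ?thesis using P that G(3) unfolding Q_def Z_def private_neighbour_def by auto
  qed
  have "inj_on p Y"
  proof (rule inj_onI)
    fix y1 y2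
    assume h: "y1 \<in> Y" "y2 \<in> Y" "p y1 = p y2"
    have "y2 \<in> X" "E (p y1) y2" using pp[OF h(2)] h(3) G(3) unfolding private_neighbour_def by auto
    thus "y1 = y2" using pp[OF h(1)] unfolding private_neighbour_def by auto
  qed
  have fZ: "finite Z" using fA unfolding Z_def by auto
  have QZ: "Q \<subseteq> Z" unfolding Q_def by auto
  have "card Y \<le> card Q"
    using card_inj_on_le[OF \<open>inj_on p Y\<close>] pQ fZ QZ finite_subset by blast
  moreover have "card Q \<le> card Z" using QZ fZ card_mono by blast
  moreover have "card Z \<le> card (A - X)" using ZAX fA card_mono by blast
  ultimately have eq: "card Y = card Z" "card Q = card Z" using cAX by linarith+
  have "Q = Z" using card_subset_eq[OF fZ QZ eq(2)] .
  hence "\<forall>z\<in>Z. \<exists>y\<in>Y. private_neighbour V E X y z" unfolding Q_def by auto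
  thus ?thesis using eq(1) unfolding A_def N_def Y_def Z_def Let_def by simp
qed

end
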